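(* Let $f(z)=\sum_{n\ge0} a_n z^{-n}\in\mathbb{C}[[z^{-1}]]$ be a Gevrey-1 formal series with Borel transform $\widetilde f(\zeta)=\sum_{n\ge1} \frac{a_n\zeta^{n-1}}{(n-1)!}$. Let $\lambda>0$ and assume that $\widetilde f$ extends holomorphically to $\Delta_\lambda$ and that there exist $A>0$, $B>0$ with $|\widetilde f(\zeta)|\le A e^{B|\zeta|}$ for all $\zeta\in\Delta_\lambda$. Put $a_n^{(\lambda)}=\lambda^{n-1}a_n$ and $b_n^{(\lambda)}=\frac{1}{n!}\sum_{k=1}^{n+1}(-1)^{n-k+1}\mathfrak{s}(n,k-1)\,a_k^{(\lambda)}$. Then for every $n\ge0$, $$|b_n^{(\lambda)}|\le\frac{A\,(n+\lambda B)^{n+\lambda B}}{(\lambda B)^{\lambda B}\,n^n}$$ (with the convention $0^0=1$).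
   Context: $\Delta$ is the image of the open disc $D(1,1)=\{s:|s-1|<1\}$ under $s\mapsto-\ln s$ (principal logarithm), and $\Delta_\lambda=\{\lambda\zeta:\zeta\in\Delta\}$. Gevrey-1 means $|a_n|\le CK^nn!$ for some constants. Stirling numbers of the first kind: $\prod_{k=0}^{n-1}(x-k)=\sum_{k=0}^n\mathfrak{s}(n,k)x^k$. *)

theory Defs
  imports "HOL-Analysis.Analysis" "HOL-Computational_Algebra.Polynomial"
begin

definition stirling1_signed :: "nat \<Rightarrow> nat \<Rightarrow> int" where
  "stirling1_signed n k = coeff (\<Prod>j<n. [:- of_nat j, 1:] :: int poly) k"

definition gevrey1 :: "(nat \<Rightarrow> complex) \<Rightarrow> bool" where
  "gevrey1 a \<longleftrightarrow> (\<exists>C K. \<forall>n. norm (a n) \<le> C * K ^ n * fact n)"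

definition Delta :: "complex set" where
  "Delta = (\<lambda>s. - Ln s) ` ball 1 1"

definition Delta_lam :: "real \<Rightarrow> complex set" where
  "Delta_lam lam = (\<lambda>\<zeta>. complex_of_real lam * \<zeta>) ` Delta"

definition borel_term :: "(nat \<Rightarrow> complex) \<Rightarrow> complex \<Rightarrow> nat \<Rightarrow> complex" where
  "borel_term a \<zeta> m = a (Suc m) * \<zeta> ^ m / fact m"

definition a_lam :: "real \<Rightarrow> (nat \<Rightarrow> complex) \<Rightarrow> nat \<Rightarrow> complex" where
  "a_lam lam a n = complex_of_real (lam ^ (n - 1)) * a n"

definition b_lam :: "real \<Rightarrow> (nat \<Rightarrow> complex) \<Rightarrow> nat \<Rightarrow> complex" where
  "b_lam lam a n = (1 / fact n) *
     (\<Sum>k=1..n+1. (-1) ^ (n + 1 - k) * of_int (stirling1_signed n (k - 1)) * a_lam lam a k)"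

end

theory Submission
  imports Defs "HOL-Complex_Analysis.Complex_Analysis" "HOL-Combinatorics.Stirling"
begin

lemma stirling1_signed_rel:
  "int (stirling n k) = (-1) ^ (n + k) * stirling1_signed n k"
proof (induction n arbitrary: k)
  case 0
  then show ?case by (cases k) (auto simp: stirling1_signed_def)
next
  case (Suc n)
  have P: "(\<Prod>j<Suc n. [:- of_nat j, 1:] :: int poly) =
        smult (- of_nat n) (\<Prod>j<n. [:- of_nat j, 1:]) + pCons 0 (\<Prod>j<n. [:- of_nat j, 1:])"
    by (simp add: mult_pCons_right)
  have S: "stirling1_signed (Suc n) k = - of_nat n * stirling1_signed n k
       + (if k = 0 then 0 else stirling1_signed n (k - 1))"
    unfolding stirling1_signed_def P by (cases k) auto
  show ?case
  proof (cases k)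
    case 0
    have "int n * int (stirling n 0) = 0" by (cases n) auto
    then show ?thesis using 0 S Suc.IH[of 0] by (simp add: algebra_simps)
  next
    case (Suc j)
    have S': "stirling1_signed (Suc n) (Suc j) = stirling1_signed n j - of_nat n * stirling1_signed n (Suc j)"
      using S Suc by simp
    show ?thesis using Suc Suc.IH[of j] Suc.IH[of "Suc j"]
      by (simp add: S' algebra_simps)
  qed
qed

definition L0 :: "complex fps" where
  "L0 = Abs_fps (\<lambda>n. if n = 0 then 0 else 1 / of_nat n)"

definition Est :: "nat \<Rightarrow> complex fps" where
  "Est m = Abs_fps (\<lambda>n. of_nat (stirling n m) / fact n)"

lemma stirling_sum_aux:
  "(of_nat (stirling (Suc n) (Suc m)) :: complex) / fact n = (\<Sum>i\<le>n. of_nat (stirling i m) / fact i)"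
proof (induction n)
  case 0
  then show ?case by (cases m) auto
next
  case (Suc n)
  have "(of_nat (stirling (Suc (Suc n)) (Suc m)) :: complex) / fact (Suc n)
     = (of_nat (Suc n) * of_nat (stirling (Suc n) (Suc m)) + of_nat (stirling (Suc n) m)) / fact (Suc n)"
    by (simp only: stirling.simps(4) of_nat_add of_nat_mult)
  also have "\<dots> = of_nat (stirling (Suc n) (Suc m)) / fact n + of_nat (stirling (Suc n) m) / fact (Suc n)"
    by (simp add: add_divide_distrib fact_Suc del: of_nat_Suc stirling.simps)
  finally show ?case using Suc.IH by (simp del: stirling.simps)
qed

lemma deriv_Est: "fps_deriv (Est (Suc m)) = Est m * Abs_fps (\<lambda>_. 1)"
proof (rule fps_ext)
  fix n
  have "fps_deriv (Est (Suc m)) $ n = of_nat (stirling (Suc n) (Suc m)) / fact n"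
    unfolding Est_def by (simp add: fact_Suc del: of_nat_Suc)
  also have "\<dots> = (\<Sum>i\<le>n. of_nat (stirling i m) / fact i)" by (rule stirling_sum_aux)
  also have "\<dots> = (Est m * Abs_fps (\<lambda>_. 1)) $ n"
    unfolding Est_def fps_mult_nth by (simp add: atLeast0AtMost)
  finally show "fps_deriv (Est (Suc m)) $ n = (Est m * Abs_fps (\<lambda>_. 1)) $ n" .
qed

lemma deriv_L0: "fps_deriv L0 = Abs_fps (\<lambda>_. 1)"
  by (rule fps_ext) (simp add: L0_def del: of_nat_Suc)

lemma L0_power: "L0 ^ m = fps_const (fact m) * Est m"
proof (induction m)
  case 0
  show ?case by (rule fps_ext) (auto simp: Est_def)
next
  case (Suc m)
  have "fps_deriv (L0 ^ Suc m) = of_nat (Suc m) * Abs_fps (\<lambda>_. 1) * (fps_const (fact m) * Est m)"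
    by (simp only: fps_deriv_power' deriv_L0 Suc diff_Suc_1)
  also have "\<dots> = fps_const (fact (Suc m)) * (Est m * Abs_fps (\<lambda>_. 1))"
    by (simp add: fact_Suc fps_of_nat[symmetric] mult_ac del: of_nat_Suc)
  also have "\<dots> = fps_deriv (fps_const (fact (Suc m)) * Est (Suc m))"
    by (simp add: deriv_Est)
  finally have "fps_deriv (L0 ^ Suc m) = fps_deriv (fps_const (fact (Suc m)) * Est (Suc m))" .
  hence E: "L0 ^ Suc m = fps_const ((L0 ^ Suc m) $ 0 - (fps_const (fact (Suc m)) * Est (Suc m)) $ 0)
      + fps_const (fact (Suc m)) * Est (Suc m)"
    by (rule fps_deriv_eq_iff[THEN iffD1])
  have z1: "(L0 ^ Suc m) $ 0 = 0" by (simp add: L0_def fps_nth_power_0 del: power_Suc)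
  have z2: "(fps_const (fact (Suc m)) * Est (Suc m)) $ 0 = 0" by (simp add: Est_def)
  show ?case using E unfolding z1 z2 by simp
qed

definition Lf :: "real \<Rightarrow> complex fps" where
  "Lf lam = fps_const (of_real lam) * L0"

definition Gf :: "(nat \<Rightarrow> complex) \<Rightarrow> complex fps" where
  "Gf a = Abs_fps (\<lambda>m. a (Suc m) / fact m)"

lemma stirling_signed_complex:
  assumes "i \<le> n"
  shows "(-1) ^ (n - i) * (of_int (stirling1_signed n i) :: complex) = of_nat (stirling n i)"
proof -
  have "(-1) ^ (n - i) = ((-1) ^ (n + i) :: int)"
  proof -
    have eq: "n + i = (n - i) + 2 * i" using assms by simp
    have "(-1::int) ^ (n + i) = (-1) ^ (n - i) * ((-1) ^ 2) ^ i"
      by (simp only: eq power_add power_mult)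
    then show ?thesis by simp
  qed
  then have "(-1) ^ (n - i) * stirling1_signed n i = int (stirling n i)"
    by (simp add: stirling1_signed_rel)
  then have "of_int ((-1) ^ (n - i) * stirling1_signed n i) = (of_int (int (stirling n i)) :: complex)"
    by simp
  then show ?thesis by simp
qed

lemma coeff_compose: "(Gf a oo Lf lam) $ n = b_lam lam a n"
proof -
  have pw: "(Lf lam ^ i) $ n = of_real lam ^ i * (fact i * of_nat (stirling n i) / fact n)" for i
    by (simp add: Lf_def power_mult_distrib L0_power Est_def)
  have "(Gf a oo Lf lam) $ n = (\<Sum>i=0..n. a (Suc i) / fact i * (of_real lam ^ i * (fact i * of_nat (stirling n i) / fact n)))"
    by (simp add: fps_compose_nth pw Gf_def)
  also have "\<dots> = (1 / fact n) * (\<Sum>i=0..n. of_nat (stirling n i) * (of_real (lam ^ i) * a (Suc i)))"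
    by (simp add: sum_distrib_left field_simps)
  also have "\<dots> = (1 / fact n) * (\<Sum>i=0..n. (-1) ^ (n + 1 - Suc i) * of_int (stirling1_signed n (Suc i - 1)) * a_lam lam a (Suc i))"
    by (intro arg_cong2[where f="(*)"] refl sum.cong) (auto simp: a_lam_def stirling_signed_complex)
  also have "\<dots> = b_lam lam a n"
    unfolding b_lam_def by (simp add: image_Suc_atLeastAtMost[symmetric] sum.reindex del: image_Suc_atLeastAtMost)
  finally show ?thesis .
qed

lemma L0_sums:
  assumes "norm t < 1"
  shows "(\<lambda>n. L0 $ n * t ^ n) sums (- Ln (1 - t))"
proof -
  have "(\<lambda>n. - ((- (-t)) ^ n) / of_nat n) sums ln (1 + (-t))"
    by (rule Ln_series') (use assms in simp)
  then have "(\<lambda>n. - (- (t ^ n) / of_nat n)) sums (- ln (1 - t))"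
    by (intro sums_minus) simp
  moreover have "L0 $ n * t ^ n = - (- (t ^ n) / of_nat n)" for n
    by (simp add: L0_def)
  ultimately show ?thesis by simp
qed

lemma Lf_expansion: "(\<lambda>t. of_real lam * (- Ln (1 - t))) has_fps_expansion Lf lam"
proof -
  have S: "(\<lambda>n. Lf lam $ n * t ^ n) sums (of_real lam * (- Ln (1 - t)))" if "norm t < 1" for t
  proof -
    have "(\<lambda>n. of_real lam * (L0 $ n * t ^ n)) sums (of_real lam * (- Ln (1 - t)))"
      by (intro sums_mult L0_sums that)
    then show ?thesis by (simp add: Lf_def mult.assoc)
  qed
  have "fps_conv_radius (Lf lam) \<ge> norm (1/2 :: complex)"
    unfolding fps_conv_radius_def by (rule conv_radius_geI) (use S[of "1/2"] in \<open>auto simp: sums_iff\<close>)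
  then have r: "fps_conv_radius (Lf lam) > 0"
    by (rule less_le_trans[rotated]) simp
  have "eventually (\<lambda>t. t \<in> ball 0 1) (nhds (0::complex))"
    by (rule eventually_nhds_in_open) auto
  then have "eventually (\<lambda>t. eval_fps (Lf lam) t = of_real lam * (- Ln (1 - t))) (nhds 0)"
    by eventually_elim (use S in \<open>auto simp: eval_fps_def sums_iff\<close>)
  with r show ?thesis unfolding has_fps_expansion_def by blast
qed

lemma G_expansion:
  assumes "r > 0" "\<forall>\<zeta>\<in>ball 0 r. borel_term a \<zeta> sums g \<zeta>"
  shows "g has_fps_expansion Gf a"
proof -
  have S: "(\<lambda>n. Gf a $ n * z ^ n) sums g z" if "z \<in> ball 0 r" for z
  proof -
    have "(\<lambda>n. Gf a $ n * z ^ n) = borel_term a z"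
      by (auto simp: Gf_def borel_term_def)
    then show ?thesis using assms(2) that by simp
  qed
  have "fps_conv_radius (Gf a) \<ge> norm (complex_of_real (r/2))"
    unfolding fps_conv_radius_def by (rule conv_radius_geI) (use S[of "of_real (r/2)"] assms(1) in \<open>auto simp: sums_iff\<close>)
  then have rr: "fps_conv_radius (Gf a) > 0"
    by (rule less_le_trans[rotated]) (use assms(1) in simp)
  have "eventually (\<lambda>t. t \<in> ball 0 r) (nhds (0::complex))"
    by (rule eventually_nhds_in_open) (use assms in auto)
  then have "eventually (\<lambda>t. eval_fps (Gf a) t = g t) (nhds 0)"
    by eventually_elim (use S in \<open>auto simp: eval_fps_def sums_iff\<close>)
  with rr show ?thesis unfolding has_fps_expansion_def by blast
qed

lemma norm_Ln_1_minus:
  fixes t :: complex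
  assumes "norm t < 1"
  shows "norm (Ln (1 - t)) \<le> - ln (1 - norm t)"
proof -
  have r: "(\<lambda>n. - ((- (- norm t)) ^ n) / of_nat n) sums ln (1 + (- norm t))"
    by (rule ln_series') (use assms in simp)
  have r2: "(\<lambda>n. norm (L0 $ n * t ^ n)) sums (- ln (1 - norm t))"
  proof -
    have "(\<lambda>n. norm t ^ n / of_nat n) sums (- ln (1 - norm t))"
      using sums_minus[OF r] by simp
    moreover have "norm (L0 $ n * t ^ n) = norm t ^ n / of_nat n" for n
      by (simp add: L0_def norm_mult norm_divide norm_power)
    ultimately show ?thesis by simp
  qed
  have "norm (- Ln (1 - t)) \<le> - ln (1 - norm t)"
    using L0_sums[OF assms] r2
    by (metis sums_unique summable_norm sums_summable)
  then show ?thesis by simp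
qed

theorem lemma3p4:
  fixes a :: "nat \<Rightarrow> complex" and lam A B :: real and g :: "complex \<Rightarrow> complex"
  assumes "gevrey1 a"
    and "lam > 0"
    and "g holomorphic_on Delta_lam lam"
    and "\<exists>r>0. \<forall>\<zeta>\<in>ball 0 r. borel_term a \<zeta> sums g \<zeta>"
    and "A > 0" and "B > 0"
    and "\<forall>\<zeta>\<in>Delta_lam lam. norm (g \<zeta>) \<le> A * exp (B * norm \<zeta>)"
  shows "\<forall>n. norm (b_lam lam a n) \<le>
     A * (real n + lam * B) powr (real n + lam * B) / ((lam * B) powr (lam * B) * real n ^ n)"
proof
  fix n :: nat
  obtain r where r: "r > 0" "\<forall>\<zeta>\<in>ball 0 r. borel_term a \<zeta> sums g \<zeta>" using assms(4) by blast
  define c where "c = lam * B"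
  have c: "c > 0" unfolding c_def using assms by simp
  define Lfun where "Lfun = (\<lambda>t. complex_of_real lam * (- Ln (1 - t)))"
  define H where "H = g \<circ> Lfun"
  have HE: "H has_fps_expansion (Gf a oo Lf lam)" unfolding H_def Lfun_def
    by (rule has_fps_expansion_compose[OF G_expansion[OF r] Lf_expansion]) (simp add: Lf_def L0_def)
  have coef: "b_lam lam a k = (deriv ^^ k) H 0 / fact k" for k
    using fps_nth_fps_expansion[OF HE, of k] coeff_compose by simp
  have img: "Lfun t \<in> Delta_lam lam" if "norm t < 1" for t
  proof -
    have "1 - t \<in> ball 1 1" using that by (simp add: dist_norm)
    then have "- Ln (1 - t) \<in> Delta" unfolding Delta_def by (rule imageI)
    then show ?thesis unfolding Delta_lam_def Lfun_def by (rule imageI)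
  qed
  have bnd: "norm (H t) \<le> A * exp (c * (- ln (1 - norm t)))" if "norm t < 1" for t
  proof -
    have n1: "norm (H t) \<le> A * exp (B * norm (Lfun t))"
      using assms(7) img[OF that] by (simp add: H_def)
    have "lam * norm (Ln (1 - t)) \<le> lam * (- ln (1 - norm t))"
      by (rule mult_left_mono[OF norm_Ln_1_minus[OF that]]) (use assms(2) in simp)
    then have "norm (Lfun t) \<le> lam * (- ln (1 - norm t))"
      unfolding Lfun_def using assms(2) by (simp add: norm_mult)
    then have "B * norm (Lfun t) \<le> B * (lam * (- ln (1 - norm t)))"
      by (rule mult_left_mono) (use assms(6) in simp)
    then have "B * norm (Lfun t) \<le> c * (- ln (1 - norm t))" by (simp add: c_def mult_ac)
    then have "A * exp (B * norm (Lfun t)) \<le> A * exp (c * (- ln (1 - norm t)))"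
      using assms(5) by simp
    with n1 show ?thesis by linarith
  qed
  have holL: "Lfun holomorphic_on ball 0 1"
  proof -
    have nz: "1 - z \<notin> \<real>\<^sub>\<le>\<^sub>0" if "z \<in> ball (0::complex) 1" for z
    proof -
      have "Re z \<le> norm z" by (rule complex_Re_le_cmod)
      then have "Re (1 - z) > 0" using that by simp
      then show ?thesis by (auto simp: complex_nonpos_Reals_iff)
    qed
    show ?thesis unfolding Lfun_def by (intro holomorphic_intros) (use nz in auto)
  qed
  have hol: "H holomorphic_on ball 0 1"
    unfolding H_def by (rule holomorphic_on_compose_gen[OF holL assms(3)]) (use img in auto)
  show "norm (b_lam lam a n) \<le>
     A * (real n + lam * B) powr (real n + lam * B) / ((lam * B) powr (lam * B) * real n ^ n)"
  proof (cases "n = 0")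
    case True
    have "norm (b_lam lam a n) = norm (H 0)" using coef[of 0] True by simp
    also have "\<dots> \<le> A" using bnd[of 0] by simp
    finally show ?thesis using True c assms(2,6) unfolding c_def by simp
  next
    case False
    define N where "N = real n"
    have N: "N > 0" using False unfolding N_def by simp
    define \<rho> where "\<rho> = N / (N + c)"
    have rho: "0 < \<rho>" "\<rho> < 1" unfolding \<rho>_def using N c by auto
    define M where "M = A * exp (c * (- ln (1 - \<rho>)))"
    have "norm ((deriv ^^ n) H 0) \<le> fact n * M / \<rho> ^ n"
    proof (rule Cauchy_inequality)
      show "H holomorphic_on ball 0 \<rho>" by (rule holomorphic_on_subset[OF hol]) (use rho in auto)
      show "continuous_on (cball 0 \<rho>) H"
        by (rule continuous_on_subset[OF holomorphic_on_imp_continuous_on[OF hol]]) (use rho in auto)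
      show "0 < \<rho>" by (rule rho)
      show "norm (H x) \<le> M" if "norm (0 - x) = \<rho>" for x
        using bnd[of x] that rho unfolding M_def by simp
    qed
    note D = this
    have "norm (b_lam lam a n) = norm ((deriv ^^ n) H 0) / fact n"
      using coef[of n] by (simp add: norm_divide)
    also have "\<dots> \<le> (fact n * M / \<rho> ^ n) / fact n"
      by (rule divide_right_mono[OF D]) simp
    also have "\<dots> = M / \<rho> ^ n" by simp
    finally have b1: "norm (b_lam lam a n) \<le> M / \<rho> ^ n" .
    have e1: "1 - \<rho> = c / (N + c)" unfolding \<rho>_def using N c by (simp add: field_simps)
    have e2: "exp (c * (- ln (1 - \<rho>))) = (N + c) powr c / c powr c"
      unfolding e1 using N c by (simp add: ln_div powr_def exp_diff algebra_simps)
    have e3: "\<rho> ^ n = N ^ n / (N + c) powr N"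
      unfolding \<rho>_def N_def using N c by (simp add: power_divide powr_realpow N_def)
    have "M / \<rho> ^ n = A * ((N + c) powr c * (N + c) powr N) / (c powr c * N ^ n)"
      unfolding M_def e2 e3 using N c by (simp add: field_simps)
    also have "\<dots> = A * (N + c) powr (N + c) / (c powr c * N ^ n)"
      by (simp add: powr_add add.commute)
    finally show ?thesis using b1 unfolding N_def c_def by simp
  qed
qed

end
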